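(* Let $n=2m+2$ with $m\ge0$, let $a,b,c,d\in\mathbb{C}$, and suppose $T_n$ (degree $n$) and $U_{n-2}$ (degree at most $n-2$) satisfy $T_n^2-HU_{n-2}^2=1$ with $$T_n(z)=1-\frac{2(z-c)(z-d)\prod_{j=1}^m(z-x_j)^2}{(a-c)(a-d)\prod_{j=1}^m(a-x_j)^2}=-1+\frac{2(z-a)(z-b)\prod_{j=1}^m(z-y_j)^2}{(c-a)(c-b)\prod_{j=1}^m(c-y_j)^2}$$ for some $x_1,\dots,x_m,y_1,\dots,y_m\in\mathbb{C}$. Put $s_k:=\tfrac12\bigl(a^k-b^k+c^k+d^k\bigr)$, $k=1,\dots,2m+1$, and form $F_k,\mathbf F,\mathbf F_i$ with $\nu=m+1$, $\mu=m$. Then $\det\mathbf F\ne0$ and $x_1,\dots,x_m$ (with multiplicity) are exactly the zeros of $$x^{m}\det\mathbf F+x^{m-1}\det\mathbf F_1+\dots+x\det\mathbf F_{m-1}+\det\mathbf F_m.$$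
   Context: $H(z)=(z-a)(z-b)(z-c)(z-d)$. Given complex numbers $s_1,s_2,\dots$: $F_0:=1$, $F_k:=0$ for $k<0$, and for $k\ge1$, $F_k:=\frac{(-1)^k}{k!}\det M_k$ where $M_k$ is the $k\times k$ matrix with entry $s_{i-j+1}$ for $j\le i$, entry $i$ at position $(i,i+1)$, and $0$ elsewhere. For integers $\nu\ge0,\mu\ge0$, $\mathbf F$ is the $\mu\times\mu$ matrix with $(i,j)$ entry $F_{\nu+i-j}$, and $\mathbf F_i$ ($1\le i\le\mu$) is $\mathbf F$ with its $i$-th column replaced by $(-F_{\nu+1},\dots,-F_{\nu+\mu})^T$. Convention: if $\mu=0$, $\det\mathbf F:=1$. *)

theory Defs
  imports "HOL-Computational_Algebra.Polynomial" "Jordan_Normal_Form.Determinant"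
begin

definition Hpoly :: "complex \<Rightarrow> complex \<Rightarrow> complex \<Rightarrow> complex \<Rightarrow> complex poly" where
  "Hpoly a b c d = [:-a, 1:] * [:-b, 1:] * [:-c, 1:] * [:-d, 1:]"

definition Mmat :: "(nat \<Rightarrow> complex) \<Rightarrow> nat \<Rightarrow> complex mat" where
  "Mmat s k = mat k k (\<lambda>(i, j). if j \<le> i then s (i - j + 1)
                                 else if j = i + 1 then of_nat (i + 1) else 0)"

definition Fk :: "(nat \<Rightarrow> complex) \<Rightarrow> int \<Rightarrow> complex" where
  "Fk s k = (if k < 0 then 0 else if k = 0 then 1
             else (-1) ^ nat k / fact (nat k) * det (Mmat s (nat k)))"

definition Fmat :: "(nat \<Rightarrow> complex) \<Rightarrow> nat \<Rightarrow> nat \<Rightarrow> complex mat" where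
  "Fmat s \<nu> \<mu> = mat \<mu> \<mu> (\<lambda>(i, j). Fk s (int \<nu> + int i - int j))"

definition Fmat_i :: "(nat \<Rightarrow> complex) \<Rightarrow> nat \<Rightarrow> nat \<Rightarrow> nat \<Rightarrow> complex mat" where
  "Fmat_i s \<nu> \<mu> l = mat \<mu> \<mu> (\<lambda>(i, j). if j + 1 = l then - Fk s (int \<nu> + int i + 1)
                                         else Fk s (int \<nu> + int i - int j))"

end

theory Submission
  imports Defs "HOL-Computational_Algebra.Polynomial_FPS" "HOL-Computational_Algebra.Polynomial_Factorial" "HOL-Computational_Algebra.Field_as_Ring"
begin

definition Amat :: "(nat \<Rightarrow> complex) \<Rightarrow> nat \<Rightarrow> nat \<Rightarrow> complex mat" where
 "Amat s k r = mat k k (\<lambda>(i,j). if i + 1 = k then s (r - j) else if j \<le> i then s (i - j + 1)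
     else if j = i + 1 then of_nat (i+1) else 0)"

lemma Mmat_Amat: "Mmat s k = Amat s k k"
  unfolding Mmat_def Amat_def by (rule eq_matI) (auto simp: Suc_diff_le)

lemma det_Amat_1: "det (Amat s (Suc 0) r) = s r"
proof -
  have A: "Amat s (Suc 0) r \<in> carrier_mat 1 1" by (simp add: Amat_def)
  show ?thesis
    by (subst laplace_expansion_column[OF A, of 0])
       (auto simp: cofactor_def Amat_def mat_delete_def)
qed

lemma det_Amat_rec:
  "det (Amat s (Suc (Suc k)) r) = s (r - Suc k) * det (Mmat s (Suc k)) - of_nat (Suc k) * det (Amat s (Suc k) r)"
proof -
  let ?A = "Amat s (Suc (Suc k)) r"
  have A: "?A \<in> carrier_mat (Suc (Suc k)) (Suc (Suc k))" by (simp add: Amat_def)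
  have d1: "mat_delete ?A (Suc k) (Suc k) = Mmat s (Suc k)"
    unfolding Mmat_def Amat_def mat_delete_def by (rule eq_matI) auto
  have d2: "mat_delete ?A k (Suc k) = Amat s (Suc k) r"
    unfolding Amat_def mat_delete_def by (rule eq_matI) auto
  have "det ?A = (\<Sum>i<Suc (Suc k). ?A $$ (i, Suc k) * cofactor ?A i (Suc k))"
    by (rule laplace_expansion_column[OF A]) simp
  also have "\<dots> = ?A $$ (Suc k, Suc k) * cofactor ?A (Suc k) (Suc k)
      + ?A $$ (k, Suc k) * cofactor ?A k (Suc k) + (\<Sum>i<k. ?A $$ (i, Suc k) * cofactor ?A i (Suc k))"
    by (simp add: algebra_simps)
  also have "(\<Sum>i<k. ?A $$ (i, Suc k) * cofactor ?A i (Suc k)) = 0"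
    by (rule sum.neutral) (auto simp: Amat_def)
  also have "?A $$ (Suc k, Suc k) = s (r - Suc k)" by (simp add: Amat_def)
  also have "?A $$ (k, Suc k) = of_nat (Suc k)" by (simp add: Amat_def)
  also have "cofactor ?A (Suc k) (Suc k) = det (Mmat s (Suc k))"
    unfolding cofactor_def d1 by (simp add: power_add[symmetric] mult_2[symmetric])
  also have "cofactor ?A k (Suc k) = - det (Amat s (Suc k) r)"
    unfolding cofactor_def d2 by simp
  finally show ?thesis by simp
qed

definition FF :: "(nat \<Rightarrow> complex) \<Rightarrow> nat \<Rightarrow> complex" where
  "FF s j = (-1) ^ j / fact j * det (Mmat s j)"

lemma FF_0: "FF s 0 = 1"
  by (simp add: FF_def Mmat_def)

lemma Amat_sum:
  "(-1) ^ Suc k * det (Amat s (Suc k) r) / fact k = - (\<Sum>j<Suc k. s (r - j) * FF s j)"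
proof (induction k)
  case 0
  then show ?case by (simp add: det_Amat_1 FF_0)
next
  case (Suc k)
  have f: "(fact (Suc k) :: complex) = of_nat (Suc k) * fact k" by simp
  have nz: "(fact k :: complex) \<noteq> 0" by simp
  have "(-1) ^ Suc (Suc k) * det (Amat s (Suc (Suc k)) r) / fact (Suc k)
     = - (s (r - Suc k) * FF s (Suc k)) + (-1) ^ Suc k * det (Amat s (Suc k) r) / fact k"
    unfolding det_Amat_rec FF_def f using nz
    by (simp add: field_simps del: of_nat_Suc)
  also have "\<dots> = - (\<Sum>j<Suc (Suc k). s (r - j) * FF s j)"
    using Suc by simp
  finally show ?case .
qed

lemma newton:
  "of_nat (Suc k) * FF s (Suc k) = - (\<Sum>j<Suc k. s (Suc k - j) * FF s j)"
proof -
  have nz: "(fact k :: complex) \<noteq> 0" by simp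
  have "of_nat (Suc k) * FF s (Suc k) = (-1) ^ Suc k * det (Amat s (Suc k) (Suc k)) / fact k"
    unfolding FF_def Mmat_Amat using nz by (simp add: field_simps del: of_nat_Suc)
  then show ?thesis using Amat_sum[of k s "Suc k"] by (simp only:)
qed


lemma geom_fps:
  "Abs_fps (\<lambda>i. a ^ Suc i) * (1 - fps_const (a::complex) * fps_X) = fps_const a"
proof -
  have e: "Abs_fps (\<lambda>i. a ^ Suc i) * (1 - fps_const (a::complex) * fps_X)
     = Abs_fps (\<lambda>i. a ^ Suc i) - fps_const a * (fps_X * Abs_fps (\<lambda>i. a ^ Suc i))"
    by (simp add: algebra_simps)
  show ?thesis unfolding e
    by (rule fps_ext) (auto simp: fps_X_mult_nth power_eq_if)
qed

lemma fps_ode_unique: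
  fixes Y Pi L :: "complex fps"
  assumes ode: "fps_deriv Y * Pi = L * Y" and Y0: "fps_nth Y 0 = 0" and P0: "fps_nth Pi 0 = 1"
  shows "Y = 0"
proof -
  have "\<forall>i\<le>n. fps_nth Y i = 0" for n
  proof (induction n)
    case 0 then show ?case using Y0 by simp
  next
    case (Suc k)
    have "fps_nth (fps_deriv Y * Pi) k = (\<Sum>i=0..k. fps_nth (fps_deriv Y) i * fps_nth Pi (k - i))"
      by (simp add: fps_mult_nth)
    also have "\<dots> = (\<Sum>i=0..<Suc k. of_nat (i+1) * fps_nth Y (i+1) * fps_nth Pi (k - i))"
      by (simp add: atLeastLessThanSuc_atLeastAtMost)
    also have "\<dots> = (\<Sum>i=0..<k. of_nat (i+1) * fps_nth Y (i+1) * fps_nth Pi (k - i)) + of_nat (k+1) * fps_nth Y (k+1)"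
      using P0 by simp
    also have "(\<Sum>i=0..<k. of_nat (i+1) * fps_nth Y (i+1) * fps_nth Pi (k - i)) = 0"
      using Suc.IH by (intro sum.neutral) auto
    finally have e1: "fps_nth (fps_deriv Y * Pi) k = of_nat (k+1) * fps_nth Y (k+1)" by simp
    have "fps_nth (L * Y) k = (\<Sum>i=0..k. fps_nth L i * fps_nth Y (k - i))" by (simp add: fps_mult_nth)
    also have "\<dots> = 0" using Suc.IH by (intro sum.neutral) auto
    finally have "of_nat (k+1) * fps_nth Y (k+1) = (0::complex)" using e1 ode by simp
    then have "fps_nth Y (Suc k) = 0" by (simp del: of_nat_Suc)
    then show ?case using Suc.IH le_Suc_eq by auto
  qed
  then show ?thesis by (intro fps_ext) auto
qed

lemma G_sq:
  fixes a b c d :: complex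
  defines "s \<equiv> (\<lambda>k::nat. (a ^ k - b ^ k + c ^ k + d ^ k) / 2)"
  shows "Abs_fps (FF s) * Abs_fps (FF s) * (1 - fps_const b * fps_X)
       = (1 - fps_const a * fps_X) * (1 - fps_const c * fps_X) * (1 - fps_const d * fps_X)"
proof -
  define G where "G = Abs_fps (FF s)"
  define S where "S = Abs_fps (\<lambda>i. s (Suc i))"
  define La where "La = 1 - fps_const a * fps_X"
  define Lb where "Lb = 1 - fps_const b * fps_X"
  define Lc where "Lc = 1 - fps_const c * fps_X"
  define Ld where "Ld = 1 - fps_const d * fps_X"
  have dLa: "fps_deriv La = - fps_const a" by (simp add: La_def)
  have dLb: "fps_deriv Lb = - fps_const b" by (simp add: Lb_def)
  have dLc: "fps_deriv Lc = - fps_const c" by (simp add: Lc_def)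
  have dLd: "fps_deriv Ld = - fps_const d" by (simp add: Ld_def)
  have dG: "fps_deriv G = - S * G"
  proof (rule fps_ext)
    fix k
    have "fps_nth (fps_deriv G) k = of_nat (Suc k) * FF s (Suc k)" by (simp add: G_def del: of_nat_Suc)
    also have "\<dots> = - (\<Sum>j<Suc k. s (Suc k - j) * FF s j)" by (rule newton)
    also have "(\<Sum>j<Suc k. s (Suc k - j) * FF s j) = (\<Sum>j=0..k. s (Suc k - j) * FF s j)"
      by (simp add: lessThan_Suc_atMost atLeast0AtMost)
    also have "\<dots> = (\<Sum>i=0..k. s (Suc i) * FF s (k - i))"
      by (subst sum.atLeastAtMost_rev) (auto intro!: sum.cong simp: Suc_diff_le)
    also have "\<dots> = fps_nth (S * G) k" by (simp add: fps_mult_nth S_def G_def)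
    finally show "fps_nth (fps_deriv G) k = fps_nth (- S * G) k" by simp
  qed
  have S2: "fps_const 2 * S = Abs_fps (\<lambda>i. a ^ Suc i) - Abs_fps (\<lambda>i. b ^ Suc i)
      + Abs_fps (\<lambda>i. c ^ Suc i) + Abs_fps (\<lambda>i. d ^ Suc i)"
    by (rule fps_ext) (simp add: S_def s_def)
  define N where "N = fps_const a * (Lb * Lc * Ld) - fps_const b * (La * Lc * Ld)
      + fps_const c * (La * Lb * Ld) + fps_const d * (La * Lb * Lc)"
  have H2: "fps_const 2 * S * (La * Lb * Lc * Ld) = N"
  proof -
    have "fps_const 2 * S * (La * Lb * Lc * Ld) =
      (Abs_fps (\<lambda>i. a ^ Suc i) * La) * (Lb * Lc * Ld) - (Abs_fps (\<lambda>i. b ^ Suc i) * Lb) * (La * Lc * Ld)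
      + (Abs_fps (\<lambda>i. c ^ Suc i) * Lc) * (La * Lb * Ld) + (Abs_fps (\<lambda>i. d ^ Suc i) * Ld) * (La * Lb * Lc)"
      unfolding S2 by (simp add: algebra_simps)
    then show ?thesis unfolding N_def La_def Lb_def Lc_def Ld_def geom_fps .
  qed
  define P where "P = G * G * Lb"
  define C where "C = La * Lc * Ld"
  define L where "L = - (N + fps_const b * C)"
  have dP: "fps_deriv P * (La * Lb * Lc * Ld) = L * P"
  proof -
    have "fps_deriv P * (La * Lb * Lc * Ld) = - (fps_const 2 * S * (La * Lb * Lc * Ld)) * (G * G * Lb)
        - fps_const b * (G * G * Lb) * (La * Lc * Ld)"
      unfolding P_def by (simp add: dG dLb fps_deriv_mult algebra_simps fps_numeral_fps_const del: fps_const_neg)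
    then show ?thesis unfolding H2 L_def P_def C_def by (simp add: algebra_simps)
  qed
  have dC: "fps_deriv C * (La * Lb * Lc * Ld) = L * C"
  proof -
    have dC0: "fps_deriv C = - (fps_const a * (Lc * Ld) + fps_const c * (La * Ld) + fps_const d * (La * Lc))"
      unfolding C_def by (simp add: dLa dLc dLd fps_deriv_mult algebra_simps del: fps_const_neg)
    show ?thesis by (simp only: dC0) (simp add: L_def N_def C_def algebra_simps del: fps_const_neg)
  qed
  have "P - C = 0"
  proof (rule fps_ode_unique[of _ "La * Lb * Lc * Ld" L])
    have "fps_deriv (P - C) * (La * Lb * Lc * Ld) = fps_deriv P * (La * Lb * Lc * Ld) - fps_deriv C * (La * Lb * Lc * Ld)"
      by (simp only: fps_deriv_sub left_diff_distrib)
    also have "\<dots> = L * P - L * C" by (simp only: dP dC)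
    also have "\<dots> = L * (P - C)" by (simp only: right_diff_distrib)
    finally show "fps_deriv (P - C) * (La * Lb * Lc * Ld) = L * (P - C)" .
    have "fps_nth G 0 = 1" by (simp add: G_def FF_0)
    moreover have "fps_nth Lb 0 = 1" "fps_nth La 0 = 1" "fps_nth Lc 0 = 1" "fps_nth Ld 0 = 1"
      by (simp_all add: La_def Lb_def Lc_def Ld_def)
    ultimately show "fps_nth (P - C) 0 = 0" "fps_nth (La * Lb * Lc * Ld) 0 = 1"
      by (simp_all add: P_def C_def fps_mult_nth_0)
  qed
  then have "P = C" by simp
  then show ?thesis unfolding P_def C_def G_def La_def Lb_def Lc_def Ld_def .
qed


lemma poly_eq_nonzero:
  fixes p q :: "complex poly"
  assumes "\<And>t. t \<noteq> 0 \<Longrightarrow> poly p t = poly q t"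
  shows "p = q"
proof (rule ccontr)
  assume "p \<noteq> q"
  then have "finite {t. poly (p - q) t = 0}" by (intro poly_roots_finite) simp
  moreover have "UNIV - {0} \<subseteq> {t. poly (p - q) t = 0}" using assms by auto
  ultimately have "finite (UNIV - {0::complex})" by (rule finite_subset[rotated])
  then show False using infinite_UNIV_char_0[where 'a=complex] by simp
qed

lemma fps_zero_prefix:
  fixes U V W :: "complex fps"
  assumes "U * V = fps_X ^ N * W" "fps_nth V 0 \<noteq> 0" "k < N"
  shows "fps_nth U k = 0"
proof -
  have "U = U * V * inverse V" using assms(2) by (simp add: mult.assoc inverse_mult_eq_1')
  also have "\<dots> = fps_X ^ N * (W * inverse V)" using assms(1) by (simp add: mult.assoc)
  finally show ?thesis using assms(3) by (simp add: fps_X_power_mult_nth)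
qed

lemma fps_prefix_mult:
  fixes D Q :: "complex fps"
  assumes "\<forall>i<N. fps_nth D i = 0" "k < N"
  shows "fps_nth (D * Q) k = 0"
  using assms by (auto simp: fps_mult_nth intro!: sum.neutral)

lemma lin_prod_deg: "degree (\<Prod>j<m. [:1, - f j:] :: complex poly) \<le> m"
proof (induction m)
  case 0 then show ?case by simp
next
  case (Suc m)
  have "degree (\<Prod>j<Suc m. [:1, - f j:] :: complex poly)
      \<le> degree (\<Prod>j<m. [:1, - f j:] :: complex poly) + degree [:1, - f m:]"
    by (simp only: prod.lessThan_Suc) (rule degree_mult_le)
  also have "\<dots> \<le> Suc m" using Suc by simp
  finally show ?case .
qed

lemma lin_prod_0: "coeff (\<Prod>j<m. [:1, - f j:] :: complex poly) 0 = 1"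
  by (simp add: poly_0_coeff_0[symmetric] poly_prod)

lemma lin_prod_poly:
  assumes "t \<noteq> 0"
  shows "poly (\<Prod>j<m. [:1, - f j:] :: complex poly) t = t ^ m * (\<Prod>j<m. inverse t - f j)"
proof -
  have "poly (\<Prod>j<m. [:1, - f j:] :: complex poly) t = (\<Prod>j<m. poly [:1, - f j:] t)"
    by (rule poly_prod)
  also have "\<dots> = (\<Prod>j<m. t * (inverse t - f j))"
    by (rule prod.cong) (use assms in \<open>auto simp: algebra_simps\<close>)
  also have "\<dots> = t ^ m * (\<Prod>j<m. inverse t - f j)" by (simp add: prod.distrib)
  finally show ?thesis .
qed

lemma lin_prod_reflect:
  "reflect_poly (\<Prod>j<m. [:- f j, 1:] :: complex poly) = (\<Prod>j<m. [:1, - f j:])"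
  by (simp add: reflect_poly_prod reflect_poly_pCons' monom_Suc monom_0)

lemma lin_prod_degree: "degree (\<Prod>j<m. [:- f j, 1:] :: complex poly) = m"
  by (subst degree_prod_sum_eq) auto

lemma lin_prod_order:
  "order z (\<Prod>j<m. [:- f j, 1:] :: complex poly) = count (mset (map f [0..<m])) z"
proof (induction m)
  case 0 then show ?case by simp
next
  case (Suc m)
  have nz: "(\<Prod>j<m. [:- f j, 1:] :: complex poly) \<noteq> 0" by (simp add: prod_zero_iff)
  have o1: "order z [:- f m, 1:] = (if f m = z then 1 else 0)"
  proof (cases "f m = z")
    case True
    then show ?thesis using order_power_n_n[of z 1] by simp
  next
    case False
    then have "poly [:- f m, 1:] z \<noteq> 0" by simp
    then have "order z [:- f m, 1:] = 0" by (rule order_0I)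
    then show ?thesis using False by simp
  qed
  have "order z (\<Prod>j<Suc m. [:- f j, 1:] :: complex poly)
     = order z (\<Prod>j<m. [:- f j, 1:] :: complex poly) + order z [:- f m, 1:]"
    by (simp only: prod.lessThan_Suc) (intro order_mult, metis nz mult_eq_0_iff pCons_eq_0_iff one_neq_zero)
  then show ?case using Suc o1 by simp
qed

lemma lin_coprime:
  fixes x a :: complex
  assumes "x \<noteq> a"
  shows "coprime [:1, - x:] (monom 2 N * [:1, - a:])"
proof -
  have c1: "coprime [:1, - x:] [:0, 1:]"
  proof (rule coprimeI)
    fix d assume d1: "d dvd [:1, - x:]" and d2: "d dvd [:0, 1::complex:]"
    have "d dvd [:1, - x:] + smult x [:0, 1:]" by (intro dvd_add dvd_smult d1 d2)
    moreover have "[:1, - x:] + smult x [:0, 1:] = [:1:]" by simp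
    ultimately have "d dvd [:1:]" by simp
    then show "is_unit d" by (metis one_pCons)
  qed
  have c2: "coprime [:1, - x:] [:1, - a:]"
  proof (rule coprimeI)
    fix d assume d1: "d dvd [:1, - x:]" and d2: "d dvd [:1, - a:]"
    have "d dvd smult a [:1, - x:] - smult x [:1, - a:]" by (intro dvd_diff dvd_smult d1 d2)
    moreover have "smult a [:1, - x:] - smult x [:1, - a:] = [:a - x:]" by simp
    ultimately have "d dvd [:a - x:]" by simp
    moreover have "is_unit [:a - x:]" using assms by (simp add: is_unit_const_poly_iff dvd_field_iff)
    ultimately show "is_unit d" by (rule dvd_unit_imp_unit)
  qed
  have c3: "coprime [:1, - x:] [:2:]"
    by (rule is_unit_right_imp_coprime) (simp add: is_unit_const_poly_iff dvd_field_iff)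
  have m: "monom 2 N * [:1, - a:] = [:2:] * [:0, 1:] ^ N * [:1, - a:]"
    by (simp add: monom_altdef)
  have c4: "coprime [:1, - x:] ([:0, 1:] ^ N)"
    by (rule coprime_power_right_iff[THEN iffD2]) (rule disjI1, rule c1)
  show ?thesis unfolding m
    by (intro coprime_mult_right_iff[THEN iffD2] conjI c2 c3 c4)
qed

lemma cross_prod:
  fixes Xr Ar E B :: "complex poly" and G :: "complex fps"
  assumes D1: "\<forall>k<N. fps_nth (fps_of_poly Xr * G - fps_of_poly Ar) k = 0"
    and D2: "\<forall>k<N. fps_nth (fps_of_poly E * G - fps_of_poly B) k = 0"
    and deg: "degree (Ar * E - B * Xr) < N"
  shows "Ar * E = B * Xr"
proof -
  have "fps_of_poly (Ar * E - B * Xr) =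
      (fps_of_poly E * G - fps_of_poly B) * fps_of_poly Xr - (fps_of_poly Xr * G - fps_of_poly Ar) * fps_of_poly E"
    by (simp add: fps_of_poly_diff fps_of_poly_mult algebra_simps)
  have "coeff (Ar * E - B * Xr) k = 0" for k
  proof (cases "k < N")
    case True
    have "coeff (Ar * E - B * Xr) k = fps_nth (fps_of_poly (Ar * E - B * Xr)) k" by simp
    also have "\<dots> = fps_nth ((fps_of_poly E * G - fps_of_poly B) * fps_of_poly Xr) k
        - fps_nth ((fps_of_poly Xr * G - fps_of_poly Ar) * fps_of_poly E) k"
      unfolding \<open>fps_of_poly (Ar * E - B * Xr) = _\<close> by simp
    also have "\<dots> = 0" using fps_prefix_mult[OF D1 True] fps_prefix_mult[OF D2 True] by simp
    finally show ?thesis .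
  next
    case False
    then show ?thesis using deg by (intro coeff_eq_0) simp
  qed
  then have "Ar * E - B * Xr = 0" by (intro poly_eqI) simp
  then show ?thesis by simp
qed

lemma kernel_trivial:
  fixes Xr Ar Pa Pb Cp E B :: "complex poly" and K1 :: complex and m :: nat
  assumes ID: "smult K1 (Cp * Xr^2 - Pb * Ar^2) = monom 2 (2*m+2) * Pa"
    and Pa0: "coeff Pa 0 = 1"
    and dCp: "degree Cp \<le> 3" and dPb: "degree Pb \<le> 1"
    and dXr: "degree Xr \<le> m" and dAr: "degree Ar \<le> m + 1"
    and Xr0: "coeff Xr 0 = 1" and Ar0: "coeff Ar 0 = 1"
    and cop: "coprime Xr (monom 2 (2*m+2) * Pa)"
    and dE: "degree E \<le> m" and E0: "coeff E 0 = 0"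
    and dB: "degree B \<le> m + 1"
    and AE: "Ar * E = B * Xr"
  shows "E = 0"
proof (rule ccontr)
  assume Enz: "E \<noteq> 0"
  have Xrnz: "Xr \<noteq> 0" using Xr0 by auto
  have Arnz: "Ar \<noteq> 0" using Ar0 by auto
  have "(monom 2 (2*m+2) * Pa) * E = smult K1 (Cp * Xr^2 - Pb * Ar^2) * E" using ID by simp
  also have "\<dots> = smult K1 (Cp * Xr^2 * E - Pb * Ar * (Ar * E))"
    by (simp add: algebra_simps power2_eq_square)
  also have "\<dots> = smult K1 (Cp * Xr^2 * E - Pb * Ar * (B * Xr))" using AE by simp
  also have "\<dots> = Xr * smult K1 (Cp * Xr * E - Pb * Ar * B)"
    by (simp add: algebra_simps power2_eq_square)
  finally have "Xr dvd (monom 2 (2*m+2) * Pa) * E" by (metis dvd_triv_left)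
  then have "Xr dvd E" using cop coprime_dvd_mult_right_iff by blast
  then obtain q where q: "E = Xr * q" by (elim dvdE)
  have qnz: "q \<noteq> 0" using q Enz by auto
  have q0: "coeff q 0 = 0" using E0 q Xr0 by (simp add: coeff_mult_0)
  have dq: "degree q \<ge> 1"
  proof (rule ccontr)
    assume "\<not> degree q \<ge> 1"
    then have "degree q = 0" by simp
    then have "q = [:coeff q 0:]" by (rule degree_0_id[symmetric])
    then show False using q0 qnz by simp
  qed
  have "degree E = degree Xr + degree q" using q Xrnz qnz by (simp add: degree_mult_eq)
  then have dXr': "2 * degree Xr \<le> 2 * m - 2" using dE dq by linarith
  have "B * Xr = (Ar * q) * Xr" using AE q by (metis mult.assoc mult.commute)
  then have Bq: "B = Ar * q" using Xrnz by simp
  have "degree B = degree Ar + degree q" using Bq Arnz qnz by (simp add: degree_mult_eq)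
  then have dAr': "degree Ar \<le> m" using dB dq by linarith
  have d1: "degree (Cp * Xr^2) \<le> 2 * m + 1"
  proof -
    have "degree (Cp * Xr^2) \<le> degree Cp + degree (Xr^2)" by (rule degree_mult_le)
    also have "\<dots> \<le> 3 + degree Xr * 2" using dCp degree_power_le[of Xr 2] by linarith
    finally show ?thesis using dXr' dq \<open>degree E = _\<close> dE by linarith
  qed
  have d2: "degree (Pb * Ar^2) \<le> 2 * m + 1"
  proof -
    have "degree (Pb * Ar^2) \<le> degree Pb + degree (Ar^2)" by (rule degree_mult_le)
    also have "\<dots> \<le> 1 + degree Ar * 2" using dPb degree_power_le[of Ar 2] by linarith
    finally show ?thesis using dAr' by linarith
  qed
  have "degree (smult K1 (Cp * Xr^2 - Pb * Ar^2)) \<le> 2 * m + 1"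
    using degree_diff_le[OF d1 d2] degree_smult_le[of K1 "Cp * Xr^2 - Pb * Ar^2"] by linarith
  then have "coeff (smult K1 (Cp * Xr^2 - Pb * Ar^2)) (2*m+2) = 0" by (intro coeff_eq_0) simp
  moreover have "coeff (monom 2 (2*m+2) * Pa) (2*m+2) = 2" using Pa0 by (simp add: coeff_monom_mult)
  ultimately show False using ID by simp
qed


lemma Fk_nat: "Fk s (int n) = FF s n"
  by (cases "n = 0") (simp_all add: Fk_def FF_def Mmat_def)

lemma conv_coeff:
  fixes Q :: "complex poly"
  assumes "degree Q \<le> m" "m \<le> k"
  shows "fps_nth (fps_of_poly Q * Abs_fps (FF s)) k
      = coeff Q 0 * FF s k + (\<Sum>j<m. coeff Q (Suc j) * FF s (k - Suc j))"
proof -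
  have "fps_nth (fps_of_poly Q * Abs_fps (FF s)) k = (\<Sum>i=0..k. coeff Q i * FF s (k - i))"
    by (simp add: fps_mult_nth)
  also have "\<dots> = (\<Sum>i\<in>{..m}. coeff Q i * FF s (k - i))"
    by (rule sum.mono_neutral_right) (use assms in \<open>auto simp: coeff_eq_0\<close>)
  also have "\<dots> = (\<Sum>i<Suc m. coeff Q i * FF s (k - i))" by (simp add: lessThan_Suc_atMost)
  also have "\<dots> = coeff Q 0 * FF s k + (\<Sum>j<m. coeff Q (Suc j) * FF s (k - Suc j))"
    by (simp only: sum.lessThan_Suc_shift) simp
  finally show ?thesis .
qed

lemma Fmat_mult:
  assumes "v \<in> carrier_vec m" "i < m"
  shows "(Fmat s (m+1) m *\<^sub>v v) $ i = (\<Sum>j<m. FF s (m + 1 + i - j) * v $ j)"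
proof -
  let ?F = "Fmat s (m+1) m"
  have dims: "?F \<in> carrier_mat m m" by (simp add: Fmat_def)
  have ef: "?F $$ (i, j) = FF s (m + 1 + i - j)" if j: "j < m" for j
  proof -
    have eq: "int (m + 1) + int i - int j = int (m + 1 + i - j)" using j by simp
    have "?F $$ (i, j) = Fk s (int (m + 1) + int i - int j)" using j assms by (simp add: Fmat_def)
    also have "\<dots> = FF s (m + 1 + i - j)" unfolding eq by (rule Fk_nat)
    finally show ?thesis .
  qed
  have "(?F *\<^sub>v v) $ i = row ?F i \<bullet> v" using dims assms by simp
  also have "\<dots> = (\<Sum>j<m. ?F $$ (i, j) * v $ j)"
    using dims assms by (simp add: scalar_prod_def lessThan_atLeast0)
  also have "\<dots> = (\<Sum>j<m. FF s (m + 1 + i - j) * v $ j)" by (intro sum.cong refl) (metis ef lessThan_iff)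
  finally show ?thesis .
qed

lemma pow_split: "(t::complex) ^ (2 * m + 2) = t * t * (t ^ m) ^ 2"
  by (induction m) (simp_all add: algebra_simps power2_eq_square)

lemma lin_fps: "fps_of_poly [:1, - b:] = 1 - fps_const (b::complex) * fps_X"
  by (rule fps_ext) (simp add: coeff_pCons fps_X_nth split: nat.split)

lemma smult_sum_right: "smult c (sum f A) = sum (\<lambda>i. smult c (f i)) A"
  by (induction A rule: infinite_finite_induct) (simp_all add: smult_add_right)

lemma sum_sub: "u + v = (2::complex)" if "1 - u = -1 + v"
  using that by (simp add: algebra_simps)

theorem theorem2:
  fixes m :: nat and a b c d :: complex and T U :: "complex poly"
    and x y :: "nat \<Rightarrow> complex"
  defines "n \<equiv> 2 * m + 2"
  defines "s \<equiv> (\<lambda>k::nat. (a ^ k - b ^ k + c ^ k + d ^ k) / 2)"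
  assumes degT: "degree T = n"
    and degU: "degree U \<le> n - 2"
    and pell: "T ^ 2 - Hpoly a b c d * U ^ 2 = 1"
    and Tx: "\<And>z. poly T z = 1 - 2 * (z - c) * (z - d) * (\<Prod>j<m. (z - x j) ^ 2)
                 / ((a - c) * (a - d) * (\<Prod>j<m. (a - x j) ^ 2))"
    and Ty: "\<And>z. poly T z = -1 + 2 * (z - a) * (z - b) * (\<Prod>j<m. (z - y j) ^ 2)
                 / ((c - a) * (c - b) * (\<Prod>j<m. (c - y j) ^ 2))"
  shows "det (Fmat s (m + 1) m) \<noteq> 0 \<and>
    (let P = monom (det (Fmat s (m + 1) m)) m
             + (\<Sum>i\<in>{1..m}. monom (det (Fmat_i s (m + 1) m i)) (m - i))
     in P \<noteq> 0 \<and> (\<forall>z. order z P = count (mset (map x [0..<m])) z))"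
proof -
  let ?G = "Abs_fps (FF s)"
  let ?F = "Fmat s (m + 1) m"
  define den1 where "den1 = (a - c) * (a - d) * (\<Prod>j<m. (a - x j) ^ 2)"
  define den2 where "den2 = (c - a) * (c - b) * (\<Prod>j<m. (c - y j) ^ 2)"
  have den1: "den1 \<noteq> 0"
  proof
    assume "den1 = 0"
    then have z: "(a - c) * (a - d) * (\<Prod>j<m. (a - x j) ^ 2) = 0" unfolding den1_def .
    have "poly T = poly 1"
    proof
      fix w show "poly T w = poly 1 w" using Tx[of w] unfolding z by simp
    qed
    then have "T = 1" by (simp add: poly_eq_poly_eq_iff)
    then show False using degT by (simp add: n_def)
  qed
  have den2: "den2 \<noteq> 0"
  proof
    assume "den2 = 0"
    then have z: "(c - a) * (c - b) * (\<Prod>j<m. (c - y j) ^ 2) = 0" unfolding den2_def .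
    have "poly T = poly (-1)"
    proof
      fix w show "poly T w = poly (-1) w" using Ty[of w] unfolding z by simp
    qed
    then have "T = -1" by (simp add: poly_eq_poly_eq_iff)
    then show False using degT by (simp add: n_def)
  qed
  define K1 where "K1 = 2 / den1"
  define K2 where "K2 = 2 / den2"
  have K1nz: "K1 \<noteq> 0" using den1 by (simp add: K1_def)
  define Xr where "Xr = (\<Prod>j<m. [:1, - x j:] :: complex poly)"
  define Yr where "Yr = (\<Prod>j<m. [:1, - y j:] :: complex poly)"
  define X where "X = (\<Prod>j<m. [:- x j, 1:] :: complex poly)"
  define Pa where "Pa = [:1, - a:]"
  define Pb where "Pb = [:1, - b:]"
  define Pc where "Pc = [:1, - c:]"
  define Pd where "Pd = [:1, - d:]"
  have R: "smult K2 (Pa * Pb * Yr ^ 2) + smult K1 (Pc * Pd * Xr ^ 2) = monom 2 (2 * m + 2)"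
  proof (rule poly_eq_nonzero)
    fix t :: complex assume t: "t \<noteq> 0"
    define z where "z = inverse t"
    define Px where "Px = (\<Prod>j<m. z - x j)"
    define Py where "Py = (\<Prod>j<m. z - y j)"
    have tz: "t * z = 1" using t by (simp add: z_def)
    have hx: "poly Xr t = t ^ m * Px" using lin_prod_poly[OF t] by (simp add: Xr_def Px_def z_def)
    have hy: "poly Yr t = t ^ m * Py" using lin_prod_poly[OF t] by (simp add: Yr_def Py_def z_def)
    have hPa: "poly Pa t = t * (z - a)" using tz by (simp add: Pa_def algebra_simps)
    have hPb: "poly Pb t = t * (z - b)" using tz by (simp add: Pb_def algebra_simps)
    have hPc: "poly Pc t = t * (z - c)" using tz by (simp add: Pc_def algebra_simps)
    have hPd: "poly Pd t = t * (z - d)" using tz by (simp add: Pd_def algebra_simps)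
    have px2: "(\<Prod>j<m. (z - x j) ^ 2) = Px ^ 2" by (simp add: Px_def prod_power_distrib)
    have py2: "(\<Prod>j<m. (z - y j) ^ 2) = Py ^ 2" by (simp add: Py_def prod_power_distrib)
    have Tz: "1 - 2 * (z - c) * (z - d) * Px ^ 2 / den1 = -1 + 2 * (z - a) * (z - b) * Py ^ 2 / den2"
      using Tx[of z] Ty[of z] unfolding den1_def den2_def px2 py2 by simp
    have key: "K2 * ((z - a) * (z - b) * Py ^ 2) + K1 * ((z - c) * (z - d) * Px ^ 2) = 2"
    proof -
      have e1: "K1 * ((z - c) * (z - d) * Px ^ 2) = 2 * (z - c) * (z - d) * Px ^ 2 / den1"
        by (simp add: K1_def mult.assoc)
      have e2: "K2 * ((z - a) * (z - b) * Py ^ 2) = 2 * (z - a) * (z - b) * Py ^ 2 / den2"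
        by (simp add: K2_def mult.assoc)
      show ?thesis unfolding e1 e2 using sum_sub[OF Tz] by (metis add.commute)
    qed
    have "poly (smult K2 (Pa * Pb * Yr ^ 2) + smult K1 (Pc * Pd * Xr ^ 2)) t
        = K2 * (t * (z - a) * (t * (z - b)) * (t ^ m * Py) ^ 2)
          + K1 * (t * (z - c) * (t * (z - d)) * (t ^ m * Px) ^ 2)"
      unfolding poly_add poly_smult poly_mult poly_power hPa hPb hPc hPd hx hy by (rule refl)
    also have "\<dots> = t * t * (t ^ m) ^ 2 * (K2 * ((z - a) * (z - b) * Py ^ 2) + K1 * ((z - c) * (z - d) * Px ^ 2))"
      by (simp add: algebra_simps power2_eq_square)
    also have "\<dots> = t ^ (2 * m + 2) * 2" unfolding key pow_split ..
    also have "\<dots> = poly (monom 2 (2 * m + 2)) t" by (simp add: poly_monom)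
    finally show "poly (smult K2 (Pa * Pb * Yr ^ 2) + smult K1 (Pc * Pd * Xr ^ 2)) t = poly (monom 2 (2 * m + 2)) t" .
  qed
  have Xr0: "coeff Xr 0 = 1" unfolding Xr_def by (rule lin_prod_0)
  have Yr0: "coeff Yr 0 = 1" unfolding Yr_def by (rule lin_prod_0)
  have K2eq: "K2 = - K1"
  proof -
    have "poly (smult K2 (Pa * Pb * Yr ^ 2) + smult K1 (Pc * Pd * Xr ^ 2)) 0 = poly (monom 2 (2 * m + 2)) 0"
      using R by simp
    then have "K2 + K1 = 0" using Xr0 Yr0 by (simp add: poly_0_coeff_0 Pa_def Pb_def Pc_def Pd_def poly_monom power2_eq_square coeff_mult_0)
    then show ?thesis by (simp add: eq_neg_iff_add_eq_0)
  qed
  have ID0: "smult K1 (Pc * Pd * Xr ^ 2 - Pa * Pb * Yr ^ 2) = monom 2 (2 * m + 2)"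
    unfolding R[symmetric] K2eq by (simp add: smult_diff_right)
  define Ar where "Ar = Pa * Yr"
  define Cp where "Cp = Pa * Pc * Pd"
  have ID: "smult K1 (Cp * Xr ^ 2 - Pb * Ar ^ 2) = monom 2 (2 * m + 2) * Pa"
  proof -
    have "smult K1 (Cp * Xr ^ 2 - Pb * Ar ^ 2) = smult K1 (Pc * Pd * Xr ^ 2 - Pa * Pb * Yr ^ 2) * Pa"
      by (simp add: Cp_def Ar_def algebra_simps power2_eq_square)
    then show ?thesis unfolding ID0 .
  qed
  have dXr: "degree Xr \<le> m" unfolding Xr_def by (rule lin_prod_deg)
  have dYr: "degree Yr \<le> m" unfolding Yr_def by (rule lin_prod_deg)
  have dPa: "degree Pa \<le> 1" "degree Pb \<le> 1" "degree Pc \<le> 1" "degree Pd \<le> 1"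
    by (simp_all add: Pa_def Pb_def Pc_def Pd_def)
  have dAr: "degree Ar \<le> m + 1"
    using degree_mult_le[of Pa Yr] dPa dYr by (simp add: Ar_def)
  have dCp: "degree Cp \<le> 3"
    using degree_mult_le[of "Pa * Pc" Pd] degree_mult_le[of Pa Pc] dPa by (simp add: Cp_def)
  have Ar0: "coeff Ar 0 = 1" using Yr0 by (simp add: Ar_def Pa_def coeff_mult_0)
  have Pa0: "coeff Pa 0 = 1" by (simp add: Pa_def)
  have G0: "fps_nth ?G 0 = 1" by (simp add: FF_0)
  have Gsq: "?G * ?G * fps_of_poly Pb = fps_of_poly Cp"
  proof -
    have "?G * ?G * (1 - fps_const b * fps_X)
       = (1 - fps_const a * fps_X) * (1 - fps_const c * fps_X) * (1 - fps_const d * fps_X)"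
      unfolding s_def by (rule G_sq)
    then show ?thesis by (simp add: Pb_def Cp_def Pa_def Pc_def Pd_def fps_of_poly_mult lin_fps)
  qed
  define Xs where "Xs = fps_of_poly Xr"
  define As where "As = fps_of_poly Ar"
  define Lb where "Lb = fps_of_poly Pb"
  have eqF: "(Xs * ?G - As) * (fps_const K1 * Lb * (Xs * ?G + As))
      = fps_X ^ (2 * m + 2) * (fps_const 2 * fps_of_poly Pa)"
  proof -
    have "fps_of_poly (smult K1 (Cp * Xr ^ 2 - Pb * Ar ^ 2)) = fps_of_poly (monom 2 (2 * m + 2) * Pa)"
      using ID by simp
    then have "fps_const K1 * (fps_of_poly Cp * Xs ^ 2 - Lb * As ^ 2) = fps_const 2 * fps_X ^ (2 * m + 2) * fps_of_poly Pa"
      by (simp add: fps_of_poly_smult fps_of_poly_diff fps_of_poly_mult fps_of_poly_power fps_of_poly_monom Xs_def As_def Lb_def)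
    then have "fps_const K1 * (?G * ?G * Lb * Xs ^ 2 - Lb * As ^ 2) = fps_const 2 * fps_X ^ (2 * m + 2) * fps_of_poly Pa"
      unfolding Gsq[symmetric] Lb_def .
    moreover have "(Xs * ?G - As) * (fps_const K1 * Lb * (Xs * ?G + As)) = fps_const K1 * (?G * ?G * Lb * Xs ^ 2 - Lb * As ^ 2)"
      by (simp add: algebra_simps power2_eq_square)
    ultimately show ?thesis by (simp add: algebra_simps)
  qed
  have V0: "fps_nth (fps_const K1 * Lb * (Xs * ?G + As)) 0 \<noteq> 0"
    using K1nz Xr0 Ar0 G0 by (simp add: Xs_def As_def Lb_def Pb_def fps_mult_nth_0)
  have D1: "\<forall>k<2 * m + 2. fps_nth (Xs * ?G - As) k = 0"
    using fps_zero_prefix[OF eqF V0] by blast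
  define v where "v = vec m (\<lambda>j. coeff Xr (Suc j))"
  define rhs where "rhs = vec m (\<lambda>i. - Fk s (int (m + 1) + int i + 1))"
  have v: "v \<in> carrier_vec m" by (simp add: v_def)
  have Fcar: "?F \<in> carrier_mat m m" by (simp add: Fmat_def)
  have sys: "?F *\<^sub>v v = rhs"
  proof (rule eq_vecI)
    fix i assume "i < dim_vec rhs"
    then have i: "i < m" by (simp add: rhs_def)
    have "fps_nth (Xs * ?G) (m + 2 + i) = fps_nth As (m + 2 + i)"
      using D1 i by (simp add: algebra_simps)
    also have "\<dots> = 0" unfolding As_def using dAr by (simp add: coeff_eq_0)
    finally have z: "fps_nth (Xs * ?G) (m + 2 + i) = 0" .
    have "fps_nth (Xs * ?G) (m + 2 + i) = FF s (m + 2 + i) + (\<Sum>j<m. coeff Xr (Suc j) * FF s (m + 2 + i - Suc j))"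
      unfolding Xs_def using conv_coeff[OF dXr, of "m + 2 + i" s] Xr0 by simp
    also have "(\<Sum>j<m. coeff Xr (Suc j) * FF s (m + 2 + i - Suc j)) = (\<Sum>j<m. FF s (m + 1 + i - j) * v $ j)"
      by (intro sum.cong refl) (simp add: v_def)
    also have "\<dots> = (?F *\<^sub>v v) $ i" using Fmat_mult[OF v i] by simp
    finally have h: "FF s (m + 2 + i) + (?F *\<^sub>v v) $ i = 0" using z by simp
    have "(?F *\<^sub>v v) $ i = - FF s (m + 2 + i)" using h by (simp add: eq_neg_iff_add_eq_0 add.commute)
    also have "\<dots> = rhs $ i" using i by (simp add: rhs_def Fk_nat[symmetric] algebra_simps)
    finally show "(?F *\<^sub>v v) $ i = rhs $ i" .
  qed (simp add: rhs_def Fmat_def)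
  have cramer: "det (Fmat_i s (m + 1) m l) = coeff Xr l * det ?F" if l: "l \<in> {1..m}" for l
  proof -
    have "Fmat_i s (m + 1) m l = replace_col ?F rhs (l - 1)"
      using l by (intro eq_matI) (auto simp: Fmat_i_def Fmat_def replace_col_def rhs_def)
    also have "\<dots> = replace_col ?F (?F *\<^sub>v v) (l - 1)" by (simp only: sys)
    finally have eqm: "Fmat_i s (m + 1) m l = replace_col ?F (?F *\<^sub>v v) (l - 1)" .
    have lm: "l - 1 < m" using l by auto
    have "det (Fmat_i s (m + 1) m l) = v $ (l - 1) * det ?F"
      unfolding eqm by (rule cramer_lemma_mat[OF Fcar v lm])
    moreover have "v $ (l - 1) = coeff Xr l" using lm l by (simp add: v_def)
    ultimately show ?thesis by simp
  qed
  have detnz: "det ?F \<noteq> 0"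
  proof
    assume "det ?F = 0"
    then obtain \<eta> where eta: "\<eta> \<in> carrier_vec m" "\<eta> \<noteq> 0\<^sub>v m" "?F *\<^sub>v \<eta> = 0\<^sub>v m"
      using det_0_iff_vec_prod_zero[OF Fcar] by blast
    define E where "E = (\<Sum>j<m. monom (\<eta> $ j) (Suc j))"
    have cE: "coeff E k = (\<Sum>j<m. if Suc j = k then \<eta> $ j else 0)" for k
      by (simp add: E_def coeff_sum coeff_monom)
    have E0: "coeff E 0 = 0" by (simp add: cE)
    have ES: "coeff E (Suc j) = \<eta> $ j" if "j < m" for j
      using that by (simp add: cE)
    have dE: "degree E \<le> m"
      by (rule degree_le) (auto simp: cE intro!: sum.neutral)
    define Es where "Es = fps_of_poly E"
    have EG: "fps_nth (Es * ?G) (m + 2 + i) = 0" if i: "i < m" for i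
    proof -
      have "fps_nth (Es * ?G) (m + 2 + i) = (\<Sum>j<m. coeff E (Suc j) * FF s (m + 2 + i - Suc j))"
        unfolding Es_def using conv_coeff[OF dE, of "m + 2 + i" s] E0 by simp
      also have "\<dots> = (\<Sum>j<m. FF s (m + 1 + i - j) * \<eta> $ j)"
        by (intro sum.cong refl) (simp add: ES)
      also have "\<dots> = (?F *\<^sub>v \<eta>) $ i" using Fmat_mult[OF eta(1) i] by simp
      also have "\<dots> = 0" using eta(3) i by simp
      finally show ?thesis .
    qed
    define B where "B = (\<Sum>k\<le>m + 1. monom (fps_nth (Es * ?G) k) k)"
    have cB: "coeff B k = (if k \<le> m + 1 then fps_nth (Es * ?G) k else 0)" for k
      by (simp add: B_def coeff_sum coeff_monom)
    have dB: "degree B \<le> m + 1" by (rule degree_le) (simp add: cB)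
    have D2: "\<forall>k<2 * m + 2. fps_nth (Es * ?G - fps_of_poly B) k = 0"
    proof (intro allI impI)
      fix k assume k: "k < 2 * m + 2"
      show "fps_nth (Es * ?G - fps_of_poly B) k = 0"
      proof (cases "k \<le> m + 1")
        case True then show ?thesis by (simp add: cB)
      next
        case False
        define i where "i = k - (m + 2)"
        have i: "k = m + 2 + i" "i < m" using False k unfolding i_def by arith+
        then show ?thesis using EG[OF i(2)] False by (simp add: cB)
      qed
    qed
    have dZ: "degree (Ar * E - B * Xr) < 2 * m + 2"
    proof -
      have "degree (Ar * E) \<le> 2 * m + 1" using degree_mult_le[of Ar E] dAr dE by simp
      moreover have "degree (B * Xr) \<le> 2 * m + 1" using degree_mult_le[of B Xr] dB dXr by simp
      ultimately show ?thesis using degree_diff_le[of "Ar * E" "2 * m + 1" "B * Xr"] by simp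
    qed
    have AE: "Ar * E = B * Xr"
      by (rule cross_prod[OF _ _ dZ, of ?G]) (use D1 D2 in \<open>simp_all add: Xs_def As_def Es_def\<close>)
    have cop: "coprime Xr (monom 2 (2 * m + 2) * Pa)"
      unfolding Xr_def Pa_def
    proof (rule prod_coprime_left)
      fix j assume "j \<in> {..<m}"
      then have "a - x j \<noteq> 0" using den1 by (auto simp: den1_def)
      then show "coprime [:1, - x j:] (monom 2 (2 * m + 2) * [:1, - a:])"
        by (intro lin_coprime) simp
    qed
    have "E = 0"
      by (rule kernel_trivial[OF ID Pa0 dCp dPa(2) dXr dAr Xr0 Ar0 cop dE E0 dB AE])
    moreover obtain j where "j < m" "\<eta> $ j \<noteq> 0"
      using eta(1,2) by (metis eq_vecI carrier_vecD index_zero_vec(1,2))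
    ultimately show False using ES by (metis coeff_0)
  qed
  have degX: "degree X = m" unfolding X_def by (rule lin_prod_degree)
  have XrX: "coeff Xr l = coeff X (m - l)" if "l \<le> m" for l
  proof -
    have "Xr = reflect_poly X" unfolding Xr_def X_def by (rule lin_prod_reflect[symmetric])
    then show ?thesis using that degX by (simp add: coeff_reflect_poly)
  qed
  have Xm: "coeff X m = 1" using XrX[of 0] Xr0 by simp
  define P where "P = monom (det ?F) m + (\<Sum>i\<in>{1..m}. monom (det (Fmat_i s (m + 1) m i)) (m - i))"
  have PX: "P = smult (det ?F) X"
  proof -
    have "(\<Sum>i\<in>{1..m}. monom (det (Fmat_i s (m + 1) m i)) (m - i))
        = (\<Sum>i\<in>{1..m}. monom (det ?F * coeff X (m - i)) (m - i))"
    proof (intro sum.cong refl)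
      fix i assume i: "i \<in> {1..m}"
      have "det (Fmat_i s (m + 1) m i) = coeff Xr i * det ?F" using i by (rule cramer)
      moreover have "coeff Xr i = coeff X (m - i)" using i by (intro XrX) auto
      ultimately show "monom (det (Fmat_i s (m + 1) m i)) (m - i) = monom (det ?F * coeff X (m - i)) (m - i)"
        by (simp add: mult.commute)
    qed
    also have "\<dots> = (\<Sum>k<m. monom (det ?F * coeff X k) k)"
      by (rule sum.reindex_bij_witness[of _ "\<lambda>k. m - k" "\<lambda>i. m - i"]) auto
    finally have "P = monom (det ?F * coeff X m) m + (\<Sum>k<m. monom (det ?F * coeff X k) k)"
      unfolding P_def using Xm by simp
    also have "\<dots> = (\<Sum>k<Suc m. monom (det ?F * coeff X k) k)" by (simp add: add.commute)
    also have "\<dots> = smult (det ?F) (\<Sum>k\<le>m. monom (coeff X k) k)"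
      by (simp add: smult_sum_right smult_monom lessThan_Suc_atMost)
    also have "(\<Sum>k\<le>m. monom (coeff X k) k) = X" using degX by (intro poly_as_sum_of_monoms') simp
    finally show ?thesis .
  qed
  have Xnz: "X \<noteq> 0" using degX Xm by auto
  show ?thesis
    unfolding Let_def P_def[symmetric]
  proof (intro conjI allI)
    show "det ?F \<noteq> 0" by (rule detnz)
    show "P \<noteq> 0" using PX detnz Xnz by simp
    fix z
    show "order z P = count (mset (map x [0..<m])) z"
      unfolding PX order_smult[OF detnz] X_def by (rule lin_prod_order)
  qed
qed

end
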